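(* Let $h^{-1}$ and $h_2^{-1}$ be as in the context. Then: (i) for $y>1+e$, $h^{-1}(y)\le 2\,\frac{y-1}{\log(y-1)}$; (ii) for $y>1+e$, $h_2^{-1}(y)\le 2\,\frac{y-1}{\log(y-1)}-1$; (iii) for $c>\sqrt2$ and $0\le y\le 9c^{-2}(c^2/2-1)^2$, $h_2^{-1}(y)\le c\sqrt y$; in particular with $c=2$ this holds for $0\le y\le 9/4$, and with $c=2.2$ it holds for $0\le y\le 1+e$; (iv) for $0<y<\infty$, $$h_2^{-1}(y)\le\begin{cases}2.2\sqrt y, & y\le 1+e,\\[2pt] 2\frac{y-1}{\log(y-1)}-1, & y>1+e.\end{cases}$$
   Context: $h(x)=x(\log x-1)+1$ restricted to $[1,\infty)$ is an increasing bijection onto $[0,\infty)$ with inverse $h^{-1}$; $h_2(x)=h(1+x)=(1+x)\log(1+x)-x$ is an increasing bijection of $[0,\infty)$ onto itself with inverse $h_2^{-1}$. *)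

theory Defs
  imports "HOL-Analysis.Analysis"
begin

definition h :: "real \<Rightarrow> real" where
  "h x = x * (ln x - 1) + 1"

definition h2 :: "real \<Rightarrow> real" where
  "h2 x = (1 + x) * ln (1 + x) - x"

text \<open>Inverse of h restricted to [1,\<infinity>), defined on [0,\<infinity>).\<close>
definition h_inv :: "real \<Rightarrow> real" where
  "h_inv y = (THE x. x \<ge> 1 \<and> h x = y)"

definition h2_inv :: "real \<Rightarrow> real" where
  "h2_inv y = (THE x. x \<ge> 0 \<and> h2 x = y)"

end

theory Submission
  imports Defs
begin

lemma h_deriv: "x > 0 \<Longrightarrow> DERIV h x :> ln x"
  unfolding h_def
  by (auto intro!: derivative_eq_intros simp: field_simps)

lemma h_cont: "a > 0 \<Longrightarrow> continuous_on {a..b} h"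
  unfolding h_def
  by (intro continuous_intros) auto

lemma h_strict: assumes "1 \<le> a" "a < b" shows "h a < h b"
proof (rule DERIV_pos_imp_increasing_open[OF assms(2)])
  fix x assume "a < x" "x < b"
  then show "\<exists>y. DERIV h x :> y \<and> y > 0"
    using assms by (intro exI[of _ "ln x"]) (auto intro: h_deriv)
next
  show "continuous_on {a..b} h" using assms by (intro h_cont) auto
qed

lemma h2_h: "h2 x = h (1 + x)"
  unfolding h_def h2_def by (simp add: algebra_simps)

lemma h1: "h 1 = 0" unfolding h_def by simp

lemma inv_bound:
  assumes B: "1 \<le> B" and y: "0 \<le> y" "y \<le> h B"
  shows "h_inv y \<le> B \<and> h2_inv y \<le> B - 1"
proof -
  obtain x where x: "1 \<le> x" "x \<le> B" "h x = y"
    using IVT'[of h 1 y B] h_cont[of 1 B] B y h1 by auto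
  have uniq: "z = x" if "1 \<le> z" "h z = y" for z
  proof (rule ccontr)
    assume "z \<noteq> x"
    then consider "z < x" | "x < z" by linarith
    then show False
    proof cases
      case 1 then have "h z < h x" using h_strict that by blast
      then show False using that x by simp
    next
      case 2 then have "h x < h z" using h_strict x by blast
      then show False using that x by simp
    qed
  qed
  have "h_inv y = x"
    unfolding h_inv_def
  proof (rule the_equality)
    show "1 \<le> x \<and> h x = y" using x by simp
  next
    fix z assume "1 \<le> z \<and> h z = y"
    then show "z = x" using uniq[of z] by blast
  qed
  moreover have "h2_inv y = x - 1"
    unfolding h2_inv_def h2_h
  proof (rule the_equality)
    show "0 \<le> x - 1 \<and> h (1 + (x - 1)) = y" using x by simp
  next
    fix z assume "0 \<le> z \<and> h (1 + z) = y"
    then have "1 + z = x" using uniq[of "1 + z"] by auto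
    then show "z = x - 1" by simp
  qed
  ultimately show ?thesis using x by auto
qed

lemma ln_lower: fixes x :: real assumes "0 \<le> x" shows "2 * x / (2 + x) \<le> ln (1 + x)"
proof -
  let ?g = "\<lambda>x. ln (1 + x) - 2 * x / (2 + x)"
  have "?g 0 \<le> ?g x"
  proof (rule DERIV_nonneg_imp_increasing_open[OF assms])
    fix t :: real assume t: "0 < t" "t < x"
    have d1: "DERIV ?g t :> 1 / (1 + t) - 4 / (2 + t)^2"
      using t by (auto intro!: derivative_eq_intros simp: field_simps power2_eq_square)
    have "(2 + t)^2 - 4 * (1 + t) = t^2" by (simp add: power2_eq_square algebra_simps)
    then have "4 * (1 + t) \<le> (2 + t)^2" using zero_le_power2[of t] by linarith
    then have "4 / (2 + t)^2 \<le> 1 / (1 + t)" using t by (simp add: divide_simps)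
    then show "\<exists>y. DERIV ?g t :> y \<and> y \<ge> 0" using d1 by (intro exI[of _ "1 / (1 + t) - 4 / (2 + t)^2"]) auto
  next
    show "continuous_on {0..x} ?g"
      by (intro continuous_intros) auto
  qed
  then show ?thesis by simp
qed

lemma h2_lower: fixes x :: real assumes "0 \<le> x" shows "3 * x^2 / (6 + 2 * x) \<le> h2 x"
proof -
  let ?g = "\<lambda>x. (1 + x) * ln (1 + x) - x - 3 * x^2 / (6 + 2 * x)"
  have "?g 0 \<le> ?g x"
  proof (rule DERIV_nonneg_imp_increasing_open[OF assms])
    fix t :: real assume t: "0 < t" "t < x"
    have d1: "DERIV ?g t :> ln (1 + t) + (1 + t) * (1 / (1 + t)) - 1 - (3 * (2 * t) * (6 + 2 * t) - 3 * t^2 * 2) / (6 + 2 * t)^2"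
      using t by (auto intro!: derivative_eq_intros simp: power2_eq_square)
    have p: "(3 * (2 * t) * (6 + 2 * t) - 3 * t^2 * 2) * (2 + t) \<le> 2 * t * (6 + 2 * t)^2"
    proof -
      have "2 * t * (6 + 2 * t)^2 - (3 * (2 * t) * (6 + 2 * t) - 3 * t^2 * 2) * (2 + t) = 2 * t^3"
        by (simp add: power2_eq_square power3_eq_cube algebra_simps)
      moreover have "0 \<le> t^3" using t by simp
      ultimately show ?thesis by linarith
    qed
    have q: "(3 * (2 * t) * (6 + 2 * t) - 3 * t^2 * 2) / (6 + 2 * t)^2 \<le> 2 * t / (2 + t)"
    proof -
      define X where "X = 3 * (2 * t) * (6 + 2 * t) - 3 * t^2 * 2"
      have pos: "(6 + 2 * t)^2 > 0" "2 + t > 0" using t by auto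
      have e1: "X / (6 + 2 * t)^2 = (X * (2 + t)) / ((6 + 2 * t)^2 * (2 + t))"
        using pos by simp
      have e2: "2 * t / (2 + t) = (2 * t * (6 + 2 * t)^2) / ((6 + 2 * t)^2 * (2 + t))"
        using pos by simp
      have "(X * (2 + t)) / ((6 + 2 * t)^2 * (2 + t)) \<le> (2 * t * (6 + 2 * t)^2) / ((6 + 2 * t)^2 * (2 + t))"
        using p pos unfolding X_def by (intro divide_right_mono) auto
      then show ?thesis using e1 e2 unfolding X_def by simp
    qed
    have r: "(1 + t) * (1 / (1 + t)) = 1" using t by simp
    have "2 * t / (2 + t) \<le> ln (1 + t)" using t by (intro ln_lower) auto
    then show "\<exists>y. DERIV ?g t :> y \<and> y \<ge> 0" using d1 q r
      by (intro exI[of _ "ln (1 + t) + (1 + t) * (1 / (1 + t)) - 1 - (3 * (2 * t) * (6 + 2 * t) - 3 * t^2 * 2) / (6 + 2 * t)^2"]) auto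
  next
    show "continuous_on {0..x} ?g"
      by (intro continuous_intros) auto
  qed
  then show ?thesis by (simp add: h2_def)
qed

lemma part12:
  fixes y :: real
  assumes y: "y > 1 + exp 1"
  shows "h_inv y \<le> 2 * ((y - 1) / ln (y - 1)) \<and> h2_inv y \<le> 2 * ((y - 1) / ln (y - 1)) - 1"
proof -
  define t where "t = y - 1"
  define L where "L = ln t"
  define B where "B = 2 * (t / L)"
  have t: "t > exp 1" using y t_def by simp
  have t0: "t > 0" using t exp_gt_zero[of 1] by linarith
  have L1: "L > 1" unfolding L_def using t t0
    by (metis exp_gt_zero ln_exp ln_less_cancel_iff)
  have "ln t \<le> t - 1" using t0 by (rule ln_le_minus_one)
  then have Lt: "L < 2 * t" using t0 L_def by simp
  have B1: "1 \<le> B" unfolding B_def using Lt L1 by (simp add: field_simps)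
  have Bpos: "B > 0" using B1 by simp
  have t1: "t \<noteq> 1" using L1 L_def by auto
  have lnB: "ln B = ln 2 + L - ln L"
    unfolding B_def L_def using t0 L1 L_def t1
    by (simp add: ln_mult ln_div)
  have key: "ln (L / 2) \<le> L / 2 - 1" using L1 by (intro ln_le_minus_one) simp
  have "ln (L / 2) = ln L - ln 2" using L1 by (simp add: ln_div)
  then have K: "ln B - 1 \<ge> L / 2" using key lnB by linarith
  have "B * (ln B - 1) \<ge> B * (L / 2)" using K Bpos by (intro mult_left_mono) auto
  moreover have "B * (L / 2) = t" unfolding B_def using L1 by simp
  ultimately have "h B \<ge> y" unfolding h_def using t_def by simp
  have "h_inv y \<le> B \<and> h2_inv y \<le> B - 1"
  proof -
    have "0 \<le> y" using y exp_gt_zero[of 1] by linarith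
    then show ?thesis using inv_bound[OF B1] \<open>h B \<ge> y\<close> by blast
  qed
  then show ?thesis unfolding B_def t_def L_def .
qed

lemma part3:
  fixes c y :: real
  assumes c: "c > sqrt 2" and y0: "0 \<le> y" and yb: "y \<le> 9 / c\<^sup>2 * (c\<^sup>2 / 2 - 1)\<^sup>2"
  shows "h2_inv y \<le> c * sqrt y"
proof -
  have c0: "c > 0" using c real_sqrt_ge_zero[of 2] by linarith
  have "(sqrt 2)^2 < c^2" using c by (intro power_strict_mono) auto
  then have c2: "c^2 > 2" by simp
  define x where "x = c * sqrt y"
  have x0: "x \<ge> 0" unfolding x_def using c0 y0 by simp
  have xsq: "x^2 = c^2 * y" unfolding x_def using y0 by (simp add: power_mult_distrib)
  have "c^2 * y \<le> c^2 * (9 / c\<^sup>2 * (c\<^sup>2 / 2 - 1)\<^sup>2)" using yb c0 by (intro mult_left_mono) auto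
  also have "\<dots> = (3 * (c\<^sup>2 / 2 - 1))^2" using c0 by (simp add: power2_eq_square algebra_simps)
  finally have "x^2 \<le> (3 * (c\<^sup>2 / 2 - 1))^2" using xsq by simp
  moreover have "0 \<le> 3 * (c\<^sup>2 / 2 - 1)" using c2 by simp
  ultimately have xb: "x \<le> 3 * (c\<^sup>2 / 2 - 1)" by (rule power2_le_imp_le)
  have "3 * (c\<^sup>2 / 2 - 1) = 3 * c^2 / 2 - 3" by (simp add: algebra_simps)
  then have "6 + 2 * x \<le> 3 * c^2" using xb by linarith
  then have "y * (6 + 2 * x) \<le> y * (3 * c^2)" using y0 by (rule mult_left_mono)
  also have "\<dots> = 3 * x^2" using xsq by simp
  finally have "y * (6 + 2 * x) \<le> 3 * x^2" .
  moreover have "6 + 2 * x > 0" using x0 by linarith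
  ultimately have "y \<le> 3 * x^2 / (6 + 2 * x)" by (simp add: le_divide_eq)
  also have "\<dots> \<le> h2 x" using x0 by (rule h2_lower)
  finally have "y \<le> h (1 + x)" by (simp add: h2_h)
  moreover have "1 \<le> 1 + x" using x0 by simp
  ultimately have "h2_inv y \<le> (1 + x) - 1" using inv_bound[of "1 + x" y] y0 by blast
  then show ?thesis unfolding x_def by simp
qed

lemma part_c2: "0 \<le> y \<Longrightarrow> y \<le> 9 / 4 \<Longrightarrow> h2_inv y \<le> 2 * sqrt y"
proof -
  assume "0 \<le> y" "y \<le> 9 / 4"
  moreover have "sqrt 2 < (2::real)"
    using real_sqrt_less_mono[of 2 4] by simp
  ultimately show ?thesis using part3[of 2 y] by (simp add: power2_eq_square)
qed

lemma part_c22: "0 \<le> y \<Longrightarrow> y \<le> 1 + exp 1 \<Longrightarrow> h2_inv y \<le> 2.2 * sqrt y"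
proof -
  assume a: "0 \<le> y" "y \<le> 1 + exp 1"
  have "sqrt 2 < (2::real)"
    using real_sqrt_less_mono[of 2 4] by simp
  then have s: "sqrt 2 < (2.2::real)" by simp
  have "(9::real) / 2.2\<^sup>2 * (2.2\<^sup>2 / 2 - 1)\<^sup>2 = 45369 / 12100" by (simp add: power2_eq_square)
  moreover have "exp 1 < (272/100::real)" by (rule e_less_272)
  ultimately have "y \<le> 9 / 2.2\<^sup>2 * (2.2\<^sup>2 / 2 - 1)\<^sup>2" using a by linarith
  then show ?thesis using part3[OF s a(1)] by simp
qed

theorem lemma15:
  shows "(\<forall>y::real. y > 1 + exp 1 \<longrightarrow> h_inv y \<le> 2 * ((y - 1) / ln (y - 1)))
    \<and> (\<forall>y::real. y > 1 + exp 1 \<longrightarrow> h2_inv y \<le> 2 * ((y - 1) / ln (y - 1)) - 1)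
    \<and> (\<forall>c y::real. c > sqrt 2 \<longrightarrow> 0 \<le> y \<longrightarrow> y \<le> 9 / c\<^sup>2 * (c\<^sup>2 / 2 - 1)\<^sup>2
          \<longrightarrow> h2_inv y \<le> c * sqrt y)
    \<and> (\<forall>y::real. 0 \<le> y \<longrightarrow> y \<le> 9 / 4 \<longrightarrow> h2_inv y \<le> 2 * sqrt y)
    \<and> (\<forall>y::real. 0 \<le> y \<longrightarrow> y \<le> 1 + exp 1 \<longrightarrow> h2_inv y \<le> 2.2 * sqrt y)
    \<and> (\<forall>y::real. 0 < y \<longrightarrow>
          h2_inv y \<le> (if y \<le> 1 + exp 1 then 2.2 * sqrt y
                       else 2 * ((y - 1) / ln (y - 1)) - 1))"
proof (intro conjI allI impI)
  fix y :: real assume "y > 1 + exp 1"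
  then show "h_inv y \<le> 2 * ((y - 1) / ln (y - 1))" using part12 by blast
next
  fix y :: real assume "y > 1 + exp 1"
  then show "h2_inv y \<le> 2 * ((y - 1) / ln (y - 1)) - 1" using part12 by blast
next
  fix c y :: real assume "c > sqrt 2" "0 \<le> y" "y \<le> 9 / c\<^sup>2 * (c\<^sup>2 / 2 - 1)\<^sup>2"
  then show "h2_inv y \<le> c * sqrt y" by (rule part3)
next
  fix y :: real assume "0 \<le> y" "y \<le> 9 / 4"
  then show "h2_inv y \<le> 2 * sqrt y" by (rule part_c2)
next
  fix y :: real assume "0 \<le> y" "y \<le> 1 + exp 1"
  then show "h2_inv y \<le> 2.2 * sqrt y" by (rule part_c22)
next
  fix y :: real assume y: "0 < y"
  show "h2_inv y \<le> (if y \<le> 1 + exp 1 then 2.2 * sqrt y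
                       else 2 * ((y - 1) / ln (y - 1)) - 1)"
  proof (cases "y \<le> 1 + exp 1")
    case True
    have "h2_inv y \<le> 2.2 * sqrt y" using part_c22[of y] y True by linarith
    then show ?thesis using True by simp
  next
    case False
    then have "y > 1 + exp 1" by linarith
    then have "h2_inv y \<le> 2 * ((y - 1) / ln (y - 1)) - 1" using part12[of y] by blast
    then show ?thesis using False by simp
  qed
qed

end
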